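(* Let $n\ge2$, $M$ a nonderogatory $d\times d$ matrix with minimal polynomial $\mathbf p$, and $\mathcal B$ a generic maximal subalgebra of $\mathcal T_{n,d}[\mathcal P(M)]$ with associated polynomials $\mathbf s_+,\mathbf s_-$; put $\mathbf d=\mathbf p/(\mathbf s_+\mathbf s_-)$. Let $A\in\mathcal B$ and polynomials $\tilde{\mathbf a}_j$ ($j=\pm1,\dots,\pm(n-1)$), each relatively prime to $\mathbf p$, satisfy $A_j=\mathbf s_+(M)\tilde{\mathbf a}_j(M)$ for $j\ge1$ and $A_j=\mathbf s_-(M)\tilde{\mathbf a}_j(M)$ for $j\le-1$. For each $i=1,\dots,n-1$ choose $\boldsymbol\gamma_i\in\mathbb C[X]$ such that $\mathbf p$ divides $\boldsymbol\gamma_i\tilde{\mathbf a}_{i-n}-1$, and set $\boldsymbol\xi_i=\tilde{\mathbf a}_i\boldsymbol\gamma_i$. Then $\mathbf d$ divides $\boldsymbol\xi_i-\boldsymbol\xi_j$ for all $i,j\in\{1,\dots,n-1\}$.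
   Context: A nonderogatory matrix is one whose minimal polynomial equals its characteristic polynomial; $\mathcal P(M)$ is the algebra of polynomials in $M$; $\mathcal T_{n,d}[\mathcal P(M)]$ is the set of $n\times n$ block Toeplitz matrices $(B_{i-j})_{i,j=0}^{n-1}$ with all $B_m\in\mathcal P(M)$. A maximal subalgebra of $\mathcal T_{n,d}[\mathcal P(M)]$ is a subalgebra contained in it, maximal under inclusion. It is generic if it is contained neither in the set of such matrices with $B_i=0$ for all $i\ge1$ nor in the set with $B_i=0$ for all $i\le-1$. For $B\in\mathcal B$ write $B_j=\mathbf b_j(M)$; $\mathbf s_+$ is the greatest common divisor of $\mathbf p$ and all $\mathbf b_j$ with $j\ge1$, $B\in\mathcal B$, and $\mathbf s_-$ the greatest common divisor of $\mathbf p$ and all $\mathbf b_j$ with $j\le-1$, $B\in\mathcal B$ (these do not depend on $j$ and $\mathbf s_+\mathbf s_-$ divides $\mathbf p$). *)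

theory Defs
  imports "Jordan_Normal_Form.Char_Poly" "HOL-Computational_Algebra.Polynomial_Factorial" "HOL-Computational_Algebra.Field_as_Ring"
begin

definition poly_mat :: "complex poly \<Rightarrow> complex mat \<Rightarrow> complex mat" where
  "poly_mat q M = mat (dim_row M) (dim_col M)
     (\<lambda>(r,c). \<Sum>i\<le>degree q. coeff q i * (M ^\<^sub>m i) $$ (r,c))"

definition is_min_poly :: "complex mat \<Rightarrow> complex poly \<Rightarrow> bool" where
  "is_min_poly M p \<longleftrightarrow> monic p \<and> poly_mat p M = 0\<^sub>m (dim_row M) (dim_col M) \<and>
     (\<forall>q. poly_mat q M = 0\<^sub>m (dim_row M) (dim_col M) \<longrightarrow> p dvd q)"

definition polys_in :: "complex mat \<Rightarrow> complex mat set" where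
  "polys_in M = {poly_mat q M | q. True}"

(* T_{n,d}[P(M)] : nd x nd block Toeplitz matrices (B_{i-j}) with all B_m in P(M), d = dim_row M *)
definition toeplitz_set :: "nat \<Rightarrow> complex mat \<Rightarrow> complex mat set" where
  "toeplitz_set n M = (let d = dim_row M in
     {A. A \<in> carrier_mat (n*d) (n*d) \<and>
        (\<exists>B::int \<Rightarrow> complex mat. (\<forall>m. B m \<in> polys_in M) \<and>
           (\<forall>r < n*d. \<forall>c < n*d.
              A $$ (r,c) = B (int (r div d) - int (c div d)) $$ (r mod d, c mod d)))})"

(* the block A_m (m = i - j) of an nd x nd block Toeplitz matrix with d x d blocks *)
definition blk :: "nat \<Rightarrow> complex mat \<Rightarrow> int \<Rightarrow> complex mat" where
  "blk d A m = mat d d (\<lambda>(k,l). if m \<ge> 0 then A $$ (nat m * d + k, l)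
                                           else A $$ (k, nat (- m) * d + l))"

definition is_subalgebra :: "nat \<Rightarrow> complex mat set \<Rightarrow> bool" where
  "is_subalgebra N S \<longleftrightarrow> S \<subseteq> carrier_mat N N \<and> 0\<^sub>m N N \<in> S \<and>
     (\<forall>X\<in>S. \<forall>Y\<in>S. X + Y \<in> S \<and> X * Y \<in> S) \<and> (\<forall>c. \<forall>X\<in>S. c \<cdot>\<^sub>m X \<in> S)"

definition maximal_subalgebra_in :: "nat \<Rightarrow> complex mat set \<Rightarrow> complex mat set \<Rightarrow> bool" where
  "maximal_subalgebra_in N T S \<longleftrightarrow> is_subalgebra N S \<and> S \<subseteq> T \<and>
     (\<forall>S'. is_subalgebra N S' \<and> S' \<subseteq> T \<and> S \<subseteq> S' \<longrightarrow> S' = S)"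

definition generic :: "nat \<Rightarrow> nat \<Rightarrow> complex mat set \<Rightarrow> bool" where
  "generic n d S \<longleftrightarrow>
     \<not> (S \<subseteq> {A. \<forall>i\<in>{1..int n - 1}. blk d A i = 0\<^sub>m d d}) \<and>
     \<not> (S \<subseteq> {A. \<forall>i\<in>{1..int n - 1}. blk d A (- i) = 0\<^sub>m d d})"

definition s_plus :: "nat \<Rightarrow> complex mat \<Rightarrow> complex poly \<Rightarrow> complex mat set \<Rightarrow> complex poly" where
  "s_plus n M p S = Gcd (insert p {b. \<exists>B\<in>S. \<exists>j\<in>{1..int n - 1}. blk (dim_row M) B j = poly_mat b M})"

definition s_minus :: "nat \<Rightarrow> complex mat \<Rightarrow> complex poly \<Rightarrow> complex mat set \<Rightarrow> complex poly" where
  "s_minus n M p S = Gcd (insert p {b. \<exists>B\<in>S. \<exists>j\<in>{1..int n - 1}. blk (dim_row M) B (- j) = poly_mat b M})"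

end

theory Submission
  imports Defs
begin

lemma pm_carrier[simp]: "M \<in> carrier_mat d d \<Longrightarrow> poly_mat q M \<in> carrier_mat d d"
  unfolding poly_mat_def by auto

lemma pm_dim[simp]: "dim_row (poly_mat q M) = dim_row M" "dim_col (poly_mat q M) = dim_col M"
  unfolding poly_mat_def by auto

lemma pm_entry:
  assumes M: "M \<in> carrier_mat d d" and r: "r < d" and c: "c < d" and N: "degree q \<le> N"
  shows "poly_mat q M $$ (r,c) = (\<Sum>i\<le>N. coeff q i * (M ^\<^sub>m i) $$ (r,c))"
proof -
  have "poly_mat q M $$ (r,c) = (\<Sum>i\<le>degree q. coeff q i * (M ^\<^sub>m i) $$ (r,c))"
    using M r c unfolding poly_mat_def by auto
  also have "\<dots> = (\<Sum>i\<le>N. coeff q i * (M ^\<^sub>m i) $$ (r,c))"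
    by (rule sum.mono_neutral_left) (use N in \<open>auto simp: coeff_eq_0\<close>)
  finally show ?thesis .
qed

lemma mat_eqI_d:
  assumes "A \<in> carrier_mat d d" "B \<in> carrier_mat d d"
    "\<And>r c. r < d \<Longrightarrow> c < d \<Longrightarrow> A $$ (r,c) = B $$ (r,c)"
  shows "A = B"
  using assms by (intro eq_matI) auto

lemma pm_add:
  assumes M: "M \<in> carrier_mat d d"
  shows "poly_mat (f + g) M = poly_mat f M + poly_mat g M"
proof (rule mat_eqI_d[of _ d])
  fix r c assume r': "r < d" and c': "c < d"
  let ?N = "max (degree f) (degree g)"
  have dd: "degree (f+g) \<le> ?N" by (rule degree_add_le) auto
  show "poly_mat (f + g) M $$ (r, c) = (poly_mat f M + poly_mat g M) $$ (r, c)"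
    using pm_entry[OF M r' c' dd] pm_entry[OF M r' c', of f ?N] pm_entry[OF M r' c', of g ?N] r' c' M
    by (simp add: sum.distrib distrib_right)
qed (use M in \<open>auto intro!: pm_carrier\<close>)

lemma pm_smult:
  assumes M: "M \<in> carrier_mat d d"
  shows "poly_mat (Polynomial.smult a f) M = a \<cdot>\<^sub>m poly_mat f M"
proof (rule mat_eqI_d[of _ d])
  fix r c assume r': "r < d" and c': "c < d"
  show "poly_mat (Polynomial.smult a f) M $$ (r, c) = (a \<cdot>\<^sub>m poly_mat f M) $$ (r, c)"
    using pm_entry[OF M r' c', of "Polynomial.smult a f" "degree f"] pm_entry[OF M r' c', of f "degree f"] r' c' M
    by (simp add: sum_distrib_left mult.assoc)
qed (use M in \<open>auto intro!: pm_carrier\<close>)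

lemma pm_const:
  assumes M: "M \<in> carrier_mat d d"
  shows "poly_mat [:a:] M = a \<cdot>\<^sub>m 1\<^sub>m d"
proof (rule mat_eqI_d[of _ d])
  fix r c assume r': "r < d" and c': "c < d"
  show "poly_mat [:a:] M $$ (r, c) = (a \<cdot>\<^sub>m 1\<^sub>m d) $$ (r, c)"
    using pm_entry[OF M r' c', of "[:a:]" 0] r' c' M by simp
qed (use M in \<open>auto intro!: pm_carrier\<close>)

lemma pm_shift:
  assumes M: "M \<in> carrier_mat d d"
  shows "poly_mat (pCons 0 f) M = poly_mat f M * M"
proof (rule mat_eqI_d[of _ d])
  fix r c assume r': "r < d" and c': "c < d"
  let ?N = "degree f"
  have dd: "degree (pCons 0 f) \<le> Suc ?N" by simp
  have "poly_mat (pCons 0 f) M $$ (r, c) = (\<Sum>i\<le>?N. coeff f i * (M ^\<^sub>m Suc i) $$ (r,c))"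
    unfolding pm_entry[OF M r' c' dd] sum.atMost_Suc_shift by simp
  also have "\<dots> = (\<Sum>i\<le>?N. coeff f i * (\<Sum>s<d. (M ^\<^sub>m i) $$ (r,s) * M $$ (s,c)))"
    using M r' c' by (auto intro!: sum.cong simp: scalar_prod_def atLeast0LessThan)
  also have "\<dots> = (\<Sum>s<d. (\<Sum>i\<le>?N. coeff f i * (M ^\<^sub>m i) $$ (r,s)) * M $$ (s,c))"
    by (simp add: sum_distrib_left sum_distrib_right mult.assoc) (rule sum.swap)
  also have "\<dots> = (poly_mat f M * M) $$ (r,c)"
    using M r' c' pm_entry[OF M r', of _ f ?N]
    by (auto intro!: sum.cong simp: scalar_prod_def atLeast0LessThan)
  finally show "poly_mat (pCons 0 f) M $$ (r, c) = (poly_mat f M * M) $$ (r, c)" .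
qed (use M in \<open>auto intro!: pm_carrier\<close>)

lemma pm_mult:
  assumes M: "M \<in> carrier_mat d d"
  shows "poly_mat (f * g) M = poly_mat f M * poly_mat g M"
proof (induction g)
  case 0
  have "poly_mat 0 M = 0\<^sub>m d d"
    by (rule mat_eqI_d[of _ d]) (use M in \<open>auto simp: poly_mat_def\<close>)
  then show ?case using M by simp
next
  case (pCons a g)
  have "poly_mat (f * pCons a g) M = poly_mat (Polynomial.smult a f) M + poly_mat (pCons 0 (f * g)) M"
    by (simp add: mult_pCons_right pm_add[OF M])
  also have "\<dots> = a \<cdot>\<^sub>m poly_mat f M + poly_mat f M * poly_mat g M * M"
    using pCons.IH by (simp add: pm_smult[OF M] pm_shift[OF M])
  also have "\<dots> = poly_mat f M * (a \<cdot>\<^sub>m 1\<^sub>m d + poly_mat g M * M)"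
  proof -
    have P: "poly_mat f M \<in> carrier_mat d d" "poly_mat g M \<in> carrier_mat d d" using M by auto
    have "poly_mat f M * (a \<cdot>\<^sub>m 1\<^sub>m d + poly_mat g M * M) = poly_mat f M * (a \<cdot>\<^sub>m 1\<^sub>m d) + poly_mat f M * (poly_mat g M * M)"
      by (rule mult_add_distrib_mat[of _ d d]) (use P M in auto)
    also have "poly_mat f M * (a \<cdot>\<^sub>m 1\<^sub>m d) = a \<cdot>\<^sub>m poly_mat f M"
      using mult_smult_distrib[OF P(1) one_carrier_mat[of d], of a] right_mult_one_mat[OF P(1)] by simp
    also have "poly_mat f M * (poly_mat g M * M) = poly_mat f M * poly_mat g M * M"
      using assoc_mult_mat[OF P M] by simp
    finally show ?thesis by simp
  qed
  also have "a \<cdot>\<^sub>m 1\<^sub>m d + poly_mat g M * M = poly_mat (pCons a g) M"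
    using M pm_add[OF M, of "[:a:]" "pCons 0 g"] by (simp add: pm_const pm_shift)
  finally show ?case .
qed

lemma pm_zero:
  assumes M: "M \<in> carrier_mat d d"
  shows "poly_mat 0 M = 0\<^sub>m d d"
  by (rule mat_eqI_d[of _ d]) (use M in \<open>auto simp: poly_mat_def\<close>)

lemma pm_entry_add:
  assumes M: "M \<in> carrier_mat d d" and "r < d" "c < d"
  shows "poly_mat (f + g) M $$ (r,c) = poly_mat f M $$ (r,c) + poly_mat g M $$ (r,c)"
  using assms by (simp add: pm_add[OF M])

lemma pm_entry_sum:
  assumes M: "M \<in> carrier_mat d d" and "r < d" "c < d"
  shows "poly_mat (\<Sum>k\<in>A. f k) M $$ (r,c) = (\<Sum>k\<in>A. poly_mat (f k) M $$ (r,c))"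
proof (induction A rule: infinite_finite_induct)
  case (infinite A)
  then show ?case using assms by (simp add: pm_zero[OF M])
next
  case empty
  then show ?case using assms by (simp add: pm_zero[OF M])
next
  case (insert x F)
  then show ?case using pm_entry_add[OF assms] by simp
qed

lemma pm_entry_mult:
  assumes M: "M \<in> carrier_mat d d" and "r < d" "c < d"
  shows "poly_mat (f * g) M $$ (r,c) = (\<Sum>l<d. poly_mat f M $$ (r,l) * poly_mat g M $$ (l,c))"
  using assms by (simp add: pm_mult[OF M] scalar_prod_def atLeast0LessThan)

lemma pm_zero_iff:
  assumes M: "M \<in> carrier_mat d d" and minp: "is_min_poly M p"
  shows "poly_mat q M = 0\<^sub>m d d \<longleftrightarrow> p dvd q"
proof
  assume "poly_mat q M = 0\<^sub>m d d" then show "p dvd q" using minp M unfolding is_min_poly_def by auto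
next
  assume "p dvd q" then obtain r where q: "q = p * r" by auto
  have "poly_mat p M = 0\<^sub>m d d" using minp M unfolding is_min_poly_def by auto
  then show "poly_mat q M = 0\<^sub>m d d" using M by (simp add: q pm_mult[OF M])
qed

lemma pm_eq_iff:
  assumes M: "M \<in> carrier_mat d d" and minp: "is_min_poly M p"
  shows "poly_mat f M = poly_mat g M \<longleftrightarrow> p dvd f - g"
proof -
  have e: "poly_mat f M = poly_mat g M + poly_mat (f - g) M"
    using pm_add[OF M, of g "f - g"] by simp
  have "poly_mat f M = poly_mat g M \<longleftrightarrow> poly_mat (f - g) M = 0\<^sub>m d d"
  proof
    assume h: "poly_mat f M = poly_mat g M"
    show "poly_mat (f - g) M = 0\<^sub>m d d"
    proof (rule mat_eqI_d[of _ d])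
      fix r c assume rc: "r < d" "c < d"
      have "poly_mat f M $$ (r,c) = poly_mat g M $$ (r,c) + poly_mat (f - g) M $$ (r,c)"
        using pm_entry_add[OF M rc, of g "f - g"] by simp
      then show "poly_mat (f - g) M $$ (r,c) = 0\<^sub>m d d $$ (r,c)" using h rc by simp
    qed (use M in auto)
  next
    assume "poly_mat (f - g) M = 0\<^sub>m d d"
    then show "poly_mat f M = poly_mat g M" using e M by simp
  qed
  then show ?thesis using pm_zero_iff[OF M minp] by simp
qed

lemma pm_entry_cong:
  assumes M: "M \<in> carrier_mat d d" and minp: "is_min_poly M p" and "p dvd f - g"
    and "r < d" "c < d"
  shows "poly_mat f M $$ (r,c) = poly_mat g M $$ (r,c)"
proof -
  have "poly_mat f M = poly_mat g M" using assms pm_eq_iff[OF M minp] by blast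
  then show ?thesis by simp
qed

lemma dvd_of_entries:
  assumes M: "M \<in> carrier_mat d d" and minp: "is_min_poly M p"
    and "\<And>r c. r < d \<Longrightarrow> c < d \<Longrightarrow> poly_mat f M $$ (r,c) = poly_mat g M $$ (r,c)"
  shows "p dvd f - g"
proof -
  have "poly_mat f M = poly_mat g M" by (rule mat_eqI_d[of _ d]) (use assms in auto)
  then show ?thesis using pm_eq_iff[OF M minp] by simp
qed

lemma sum_split_blocks: fixes g :: "nat \<Rightarrow> 'a::comm_monoid_add" shows "(\<Sum>t<n*d. g t) = (\<Sum>k<n. \<Sum>l<d. g (k*d + l))"
proof -
  have "(\<Sum>t<n*d. g t) = (\<Sum>k<n. sum g {k*d..<k*d+d})" using sum.nat_group[of g d n] by simp
  also have "\<dots> = (\<Sum>k<n. \<Sum>l<d. g (k*d + l))"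
  proof (rule sum.cong[OF refl])
    fix k
    have "\<And>m. sum g {m..<m+d} = (\<Sum>l<d. g (m + l))"
    proof -
      fix m show "sum g {m..<m+d} = (\<Sum>l<d. g (m + l))"
      proof (induction d)
        case (Suc d)
        have "sum g {m..<m + Suc d} = sum g {m..<m+d} + g (m+d)"
          by (simp add: atLeastLessThanSuc add.commute)
        then show ?case using Suc by simp
      qed simp
    qed
    then show "sum g {k*d..<k*d+d} = (\<Sum>l<d. g (k*d + l))" .
  qed
  finally show ?thesis .
qed

definition toepM :: "nat \<Rightarrow> complex mat \<Rightarrow> (int \<Rightarrow> complex poly) \<Rightarrow> complex mat" where
  "toepM n M b = mat (n * dim_row M) (n * dim_row M)
     (\<lambda>(r,s). poly_mat (b (int (r div dim_row M) - int (s div dim_row M))) M $$ (r mod dim_row M, s mod dim_row M))"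

lemma toepM_dims[simp]: "dim_row (toepM n M b) = n * dim_row M" "dim_col (toepM n M b) = n * dim_row M"
  unfolding toepM_def by auto

lemma toepM_carrier[simp]: "M \<in> carrier_mat d d \<Longrightarrow> toepM n M b \<in> carrier_mat (n*d) (n*d)"
  unfolding toepM_def by auto

lemma toepM_entry:
  assumes M: "M \<in> carrier_mat d d" and "r < n*d" "s < n*d"
  shows "toepM n M b $$ (r,s) = poly_mat (b (int (r div d) - int (s div d))) M $$ (r mod d, s mod d)"
  using assms unfolding toepM_def by auto

lemma toepM_in: assumes M: "M \<in> carrier_mat d d" shows "toepM n M b \<in> toeplitz_set n M"
  unfolding toeplitz_set_def Let_def
  using M toepM_entry[OF M] by (auto intro!: exI[of _ "\<lambda>m. poly_mat (b m) M"] simp: polys_in_def)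

lemma toeplitz_rep:
  assumes M: "M \<in> carrier_mat d d" and X: "X \<in> toeplitz_set n M"
  shows "\<exists>b. X = toepM n M b"
proof -
  from X M obtain B where XC: "X \<in> carrier_mat (n*d) (n*d)" and B: "\<forall>m. B m \<in> polys_in M"
    and XB: "\<forall>r < n*d. \<forall>c < n*d. X $$ (r,c) = B (int (r div d) - int (c div d)) $$ (r mod d, c mod d)"
    unfolding toeplitz_set_def Let_def by auto
  from B have "\<forall>m. \<exists>q. B m = poly_mat q M" unfolding polys_in_def by auto
  then obtain b where b: "\<And>m. B m = poly_mat (b m) M" by metis
  have "X = toepM n M b"
    by (rule mat_eqI_d[of _ "n*d"]) (use XC XB M in \<open>auto simp: toepM_entry[OF M] b\<close>)
  then show ?thesis by blast
qed

lemma toepM_blk: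
  assumes M: "M \<in> carrier_mat d d" and m1: "- int n < m" and m2: "m < int n"
  shows "blk d (toepM n M b) m = poly_mat (b m) M"
proof (rule mat_eqI_d[of _ d])
  fix k l assume kl: "k < d" "l < d"
  show "blk d (toepM n M b) m $$ (k, l) = poly_mat (b m) M $$ (k, l)"
  proof (cases "m \<ge> 0")
    case True
    have lt: "nat m * d + k < n * d"
    proof -
      have "nat m + 1 \<le> n" using m2 True by linarith
      then have "(nat m + 1) * d \<le> n * d" by (rule mult_right_mono) simp
      then show ?thesis using kl by (simp add: algebra_simps)
    qed
    have "n > 0" using lt by (cases n) auto
    then have "d \<le> n * d" by simp
    then have l': "l < n * d" using kl by linarith
    show ?thesis using True kl lt l' M unfolding blk_def by (simp add: toepM_entry[OF M])
  next
    case False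
    have lt: "nat (-m) * d + l < n * d"
    proof -
      have "nat (-m) + 1 \<le> n" using m1 False by linarith
      then have "(nat (-m) + 1) * d \<le> n * d" by (rule mult_right_mono) simp
      then show ?thesis using kl by (simp add: algebra_simps)
    qed
    have "n > 0" using lt by (cases n) auto
    then have "d \<le> n * d" by simp
    then have k': "k < n * d" using kl by linarith
    show ?thesis using False kl lt k' M unfolding blk_def by (simp add: toepM_entry[OF M])
  qed
qed (use M in \<open>auto simp: blk_def\<close>)

lemma toepM_add:
  assumes M: "M \<in> carrier_mat d d"
  shows "toepM n M b + toepM n M c = toepM n M (\<lambda>m. b m + c m)"
proof (rule mat_eqI_d[of _ "n*d"])
  fix r cc assume rc: "r < n*d" "cc < n*d"
  then have "0 < d" by (cases d) auto
  then have "r mod d < d" "cc mod d < d" by auto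
  then show "(toepM n M b + toepM n M c) $$ (r, cc) = toepM n M (\<lambda>m. b m + c m) $$ (r, cc)"
    using rc M by (simp add: toepM_entry[OF M] pm_add[OF M])
qed (use M in auto)

lemma toepM_smult:
  assumes M: "M \<in> carrier_mat d d"
  shows "a \<cdot>\<^sub>m toepM n M b = toepM n M (\<lambda>m. Polynomial.smult a (b m))"
proof (rule mat_eqI_d[of _ "n*d"])
  fix r c assume rc: "r < n*d" "c < n*d"
  then have "0 < d" by (cases d) auto
  then have "r mod d < d" "c mod d < d" by auto
  then show "(a \<cdot>\<^sub>m toepM n M b) $$ (r, c) = toepM n M (\<lambda>m. Polynomial.smult a (b m)) $$ (r, c)"
    using rc M by (simp add: toepM_entry[OF M] pm_smult[OF M])
qed (use M in auto)

lemma toepM_zero: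
  assumes M: "M \<in> carrier_mat d d"
  shows "toepM n M (\<lambda>m. 0) = 0\<^sub>m (n*d) (n*d)"
proof (rule mat_eqI_d[of _ "n*d"])
  fix r c assume rc: "r < n*d" "c < n*d"
  then have "0 < d" by (cases d) auto
  then show "toepM n M (\<lambda>m. 0) $$ (r, c) = 0\<^sub>m (n * d) (n * d) $$ (r, c)"
    using rc by (simp add: toepM_entry[OF M] pm_zero[OF M])
qed (use M in auto)

lemma toepM_mult_entry:
  assumes M: "M \<in> carrier_mat d d" and r: "r < n*d" and s: "s < n*d"
  shows "(toepM n M b * toepM n M c) $$ (r,s) =
    poly_mat (\<Sum>k<n. b (int (r div d) - int k) * c (int k - int (s div d))) M $$ (r mod d, s mod d)"
proof -
  have d0: "0 < d" using r by (cases d) auto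
  have rm: "r mod d < d" and sm: "s mod d < d" using d0 by auto
  have "(toepM n M b * toepM n M c) $$ (r,s) = (\<Sum>t<n*d. toepM n M b $$ (r,t) * toepM n M c $$ (t,s))"
    using M r s by (simp add: scalar_prod_def atLeast0LessThan carrier_matD)
  also have "\<dots> = (\<Sum>k<n. \<Sum>l<d. toepM n M b $$ (r,k*d+l) * toepM n M c $$ (k*d+l,s))"
    by (rule sum_split_blocks)
  also have "\<dots> = (\<Sum>k<n. \<Sum>l<d. poly_mat (b (int (r div d) - int k)) M $$ (r mod d, l) *
       poly_mat (c (int k - int (s div d))) M $$ (l, s mod d))"
  proof (rule sum.cong[OF refl], rule sum.cong[OF refl])
    fix k l assume k: "k \<in> {..<n}" and l: "l \<in> {..<d}"
    have kl: "k*d + l < n*d"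
    proof -
      have "k + 1 \<le> n" using k by auto
      then have "(k + 1) * d \<le> n * d" by (rule mult_right_mono) simp
      then show ?thesis using l by (simp add: algebra_simps)
    qed
    have dv: "(k*d+l) div d = k" "(k*d+l) mod d = l" using l d0 by auto
    show "toepM n M b $$ (r,k*d+l) * toepM n M c $$ (k*d+l,s) =
      poly_mat (b (int (r div d) - int k)) M $$ (r mod d, l) * poly_mat (c (int k - int (s div d))) M $$ (l, s mod d)"
      using toepM_entry[OF M r kl, of b] toepM_entry[OF M kl s, of c] dv by simp
  qed
  also have "\<dots> = (\<Sum>k<n. poly_mat (b (int (r div d) - int k) * c (int k - int (s div d))) M $$ (r mod d, s mod d))"
    using pm_entry_mult[OF M rm sm] by simp
  also have "\<dots> = poly_mat (\<Sum>k<n. b (int (r div d) - int k) * c (int k - int (s div d))) M $$ (r mod d, s mod d)"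
    by (rule pm_entry_sum[OF M rm sm, symmetric])
  finally show ?thesis .
qed

lemma toepM_mult_eq:
  assumes M: "M \<in> carrier_mat d d" and minp: "is_min_poly M p"
    and h: "\<And>u v. u < n \<Longrightarrow> v < n \<Longrightarrow> p dvd (\<Sum>k<n. b (int u - int k) * c (int k - int v)) - e (int u - int v)"
  shows "toepM n M b * toepM n M c = toepM n M e"
proof (rule mat_eqI_d[of _ "n*d"])
  fix r s assume r': "r < n*d" and s': "s < n*d"
  have d0: "0 < d" using r' by (cases d) auto
  have u: "r div d < n" and v: "s div d < n" using r' s' d0 by (auto simp: less_mult_imp_div_less)
  show "(toepM n M b * toepM n M c) $$ (r, s) = toepM n M e $$ (r, s)"
    unfolding toepM_mult_entry[OF M r' s'] toepM_entry[OF M r' s']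
    by (rule pm_entry_cong[OF M minp h[OF u v]]) (use d0 in auto)
qed (use M in \<open>auto simp: carrier_matD\<close>)

lemma toepM_mult_extract:
  assumes M: "M \<in> carrier_mat d d" and minp: "is_min_poly M p"
    and eq: "toepM n M b * toepM n M c = toepM n M e" and u: "u < n" and v: "v < n"
  shows "p dvd (\<Sum>k<n. b (int u - int k) * c (int k - int v)) - e (int u - int v)"
proof (rule dvd_of_entries[OF M minp])
  fix rm cm assume rm: "rm < d" and cm: "cm < d"
  define r where "r = u*d + rm"
  define s where "s = v*d + cm"
  have r: "r < n*d"
  proof -
    have "u + 1 \<le> n" using u by auto
    then have "(u + 1) * d \<le> n * d" by (rule mult_right_mono) simp
    then show ?thesis using rm by (simp add: algebra_simps r_def)
  qed
  have s: "s < n*d"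
  proof -
    have "v + 1 \<le> n" using v by auto
    then have "(v + 1) * d \<le> n * d" by (rule mult_right_mono) simp
    then show ?thesis using cm by (simp add: algebra_simps s_def)
  qed
  have dv: "r div d = u" "r mod d = rm" "s div d = v" "s mod d = cm" using rm cm by (auto simp: r_def s_def)
  have "(toepM n M b * toepM n M c) $$ (r,s) = toepM n M e $$ (r,s)" using eq by simp
  then show "poly_mat (\<Sum>k<n. b (int u - int k) * c (int k - int v)) M $$ (rm, cm) =
         poly_mat (e (int u - int v)) M $$ (rm, cm)"
    unfolding toepM_mult_entry[OF M r s] toepM_entry[OF M r s] dv .
qed

lemma toep_rel:
  assumes M: "M \<in> carrier_mat d d" and minp: "is_min_poly M p"
    and XY: "toepM n M b * toepM n M c \<in> toeplitz_set n M"
    and i: "1 \<le> i" "i < n" and j: "1 \<le> j" "j < n"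
  shows "p dvd b (int i) * c (int j - int n) - b (int i - int n) * c (int j)"
proof -
  obtain e where eq: "toepM n M b * toepM n M c = toepM n M e" using toeplitz_rep[OF M XY] by blast
  define f where "f k = b (int i - int k) * c (int k + int j - int n)" for k :: nat
  have h1: "p dvd (\<Sum>k<n. b (int (i-1) - int k) * c (int k - int (n-1-j))) - e (int (i-1) - int (n-1-j))"
    by (rule toepM_mult_extract[OF M minp eq]) (use i j in auto)
  have h2: "p dvd (\<Sum>k<n. b (int i - int k) * c (int k - int (n-j))) - e (int i - int (n-j))"
    by (rule toepM_mult_extract[OF M minp eq]) (use i j in auto)
  have e1: "int (i-1) - int (n-1-j) = int i - int (n-j)" using i j by auto
  have s1: "(\<Sum>k<n. b (int (i-1) - int k) * c (int k - int (n-1-j))) = (\<Sum>k<n. f (Suc k))"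
    by (rule sum.cong[OF refl]) (use i j in \<open>auto simp: f_def of_nat_diff algebra_simps\<close>)
  have s2: "(\<Sum>k<n. b (int i - int k) * c (int k - int (n-j))) = (\<Sum>k<n. f k)"
    by (rule sum.cong[OF refl]) (use i j in \<open>auto simp: f_def of_nat_diff algebra_simps\<close>)
  have tel: "(\<Sum>k<n. f (Suc k)) - (\<Sum>k<n. f k) = f n - f 0"
    using sum.lessThan_Suc_shift[of f n] sum.lessThan_Suc[of f n] by (simp add: algebra_simps)
  have "p dvd ((\<Sum>k<n. f (Suc k)) - e (int i - int (n-j))) - ((\<Sum>k<n. f k) - e (int i - int (n-j)))"
    using dvd_diff[OF h1 h2] unfolding s1 s2 e1 .
  then have "p dvd f n - f 0" using tel by (simp add: algebra_simps)
  then have "p dvd f 0 - f n" by (metis dvd_minus_iff minus_diff_eq)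
  then show ?thesis by (simp add: f_def)
qed

lemma J_right:
  assumes M: "M \<in> carrier_mat d d" and minp: "is_min_poly M p"
    and SMp: "SM * h0 = p"
    and low: "\<And>j. 1 \<le> j \<Longrightarrow> j < int n \<Longrightarrow> SM dvd \<beta> (- j)"
    and c0: "\<And>m. m \<le> 0 \<Longrightarrow> c m = 0" and ch: "\<And>m. h0 dvd c m"
  shows "toepM n M \<beta> * toepM n M c = toepM n M (\<lambda>m. \<Sum>l\<in>{1..m}. \<beta> (m - l) * c l)"
proof (rule toepM_mult_eq[OF M minp])
  fix u v assume u: "u < n" and v: "v < n"
  define t where "t k = \<beta> (int u - int k) * c (int k - int v)" for k
  define K where "K = {k. v < k \<and> k \<le> u}"
  have Ksub: "K \<subseteq> {..<n}" using u by (auto simp: K_def)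
  have split: "(\<Sum>k<n. t k) = (\<Sum>k\<in>{..<n} - K. t k) + (\<Sum>k\<in>K. t k)"
    by (rule sum.subset_diff[OF Ksub]) simp
  have rest: "p dvd (\<Sum>k\<in>{..<n} - K. t k)"
  proof (rule dvd_sum)
    fix k assume k: "k \<in> {..<n} - K"
    show "p dvd t k"
    proof (cases "k \<le> v")
      case True
      then show ?thesis by (simp add: t_def c0)
    next
      case False
      then have uk: "u < k" "k < n" using k by (auto simp: K_def)
      have "SM dvd \<beta> (- (int k - int u))" by (rule low) (use uk in auto)
      then have "SM dvd \<beta> (int u - int k)" by simp
      then have "SM * h0 dvd t k" unfolding t_def by (rule mult_dvd_mono) (rule ch)
      then show ?thesis using SMp by simp
    qed
  qed
  have main: "(\<Sum>k\<in>K. t k) = (\<Sum>l\<in>{1..int u - int v}. \<beta> (int u - int v - l) * c l)"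
  proof (rule sum.reindex_bij_witness[where i = "\<lambda>l. nat (l + int v)" and j = "\<lambda>k. int k - int v"])
  qed (auto simp: K_def t_def)
  show "p dvd (\<Sum>k<n. \<beta> (int u - int k) * c (int k - int v)) - (\<Sum>l\<in>{1..int u - int v}. \<beta> (int u - int v - l) * c l)"
    using rest split main unfolding t_def by simp
qed

lemma J_left:
  assumes M: "M \<in> carrier_mat d d" and minp: "is_min_poly M p"
    and SMp: "SM * h0 = p"
    and low: "\<And>j. 1 \<le> j \<Longrightarrow> j < int n \<Longrightarrow> SM dvd \<beta> (- j)"
    and c0: "\<And>m. m \<le> 0 \<Longrightarrow> c m = 0" and ch: "\<And>m. h0 dvd c m"
  shows "toepM n M c * toepM n M \<beta> = toepM n M (\<lambda>m. \<Sum>l\<in>{1..m}. c l * \<beta> (m - l))"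
proof (rule toepM_mult_eq[OF M minp])
  fix u v assume u: "u < n" and v: "v < n"
  define t where "t k = c (int u - int k) * \<beta> (int k - int v)" for k
  define K where "K = {k. v \<le> k \<and> k < u}"
  have Ksub: "K \<subseteq> {..<n}" using u by (auto simp: K_def)
  have split: "(\<Sum>k<n. t k) = (\<Sum>k\<in>{..<n} - K. t k) + (\<Sum>k\<in>K. t k)"
    by (rule sum.subset_diff[OF Ksub]) simp
  have rest: "p dvd (\<Sum>k\<in>{..<n} - K. t k)"
  proof (rule dvd_sum)
    fix k assume k: "k \<in> {..<n} - K"
    show "p dvd t k"
    proof (cases "u \<le> k")
      case True
      then show ?thesis by (simp add: t_def c0)
    next
      case False
      then have uk: "k < v" using k by (auto simp: K_def)
      have "SM dvd \<beta> (- (int v - int k))" by (rule low) (use uk v in auto)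
      then have "SM dvd \<beta> (int k - int v)" by simp
      then have "h0 * SM dvd t k" unfolding t_def by (rule mult_dvd_mono[OF ch])
      then show ?thesis using SMp by (simp add: mult.commute)
    qed
  qed
  have main: "(\<Sum>k\<in>K. t k) = (\<Sum>l\<in>{1..int u - int v}. c l * \<beta> (int u - int v - l))"
  proof (rule sum.reindex_bij_witness[where i = "\<lambda>l. nat (int u - l)" and j = "\<lambda>k. int u - int k"])
  qed (auto simp: K_def t_def)
  show "p dvd (\<Sum>k<n. c (int u - int k) * \<beta> (int k - int v)) - (\<Sum>l\<in>{1..int u - int v}. c l * \<beta> (int u - int v - l))"
    using rest split main unfolding t_def by simp
qed

lemma sprod_dvd:
  assumes n2: "n \<ge> 2" and M: "M \<in> carrier_mat d d" and minp: "is_min_poly M p"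
    and maxS: "maximal_subalgebra_in (n*d) (toeplitz_set n M) S"
  shows "s_plus n M p S * s_minus n M p S dvd p"
proof -
  define SM where "SM = s_minus n M p S"
  define SP where "SP = s_plus n M p S"
  define h0 where "h0 = p div SM"
  have dR: "dim_row M = d" using M by auto
  have SMdvd: "SM dvd p" unfolding SM_def s_minus_def by (rule Gcd_dvd) simp
  have SMp: "SM * h0 = p" unfolding h0_def using SMdvd by simp
  have sub: "is_subalgebra (n*d) S" and ST: "S \<subseteq> toeplitz_set n M"
    and maxi: "\<And>S'. is_subalgebra (n*d) S' \<Longrightarrow> S' \<subseteq> toeplitz_set n M \<Longrightarrow> S \<subseteq> S' \<Longrightarrow> S' = S"
    using maxS unfolding maximal_subalgebra_in_def by auto
  from sub have Scar: "\<And>X. X \<in> S \<Longrightarrow> X \<in> carrier_mat (n*d) (n*d)" and S0: "0\<^sub>m (n*d) (n*d) \<in> S"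
    and Sadd: "\<And>X Y. X\<in>S \<Longrightarrow> Y\<in>S \<Longrightarrow> X+Y \<in> S"
    and Smul: "\<And>X Y. X\<in>S \<Longrightarrow> Y\<in>S \<Longrightarrow> X*Y \<in> S"
    and Ssm: "\<And>a X. X \<in> S \<Longrightarrow> a \<cdot>\<^sub>m X \<in> S"
    unfolding is_subalgebra_def by auto
  have Slow: "\<exists>\<beta>. X = toepM n M \<beta> \<and> (\<forall>j. 1 \<le> j \<longrightarrow> j < int n \<longrightarrow> SM dvd \<beta> (-j))" if X: "X \<in> S" for X
  proof -
    obtain \<beta> where Xb: "X = toepM n M \<beta>" using toeplitz_rep[OF M] X ST by blast
    have "\<forall>j. 1 \<le> j \<longrightarrow> j < int n \<longrightarrow> SM dvd \<beta> (-j)"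
    proof (intro allI impI)
      fix j :: int assume j: "1 \<le> j" "j < int n"
      have "blk (dim_row M) X (-j) = poly_mat (\<beta> (-j)) M"
        unfolding dR Xb by (rule toepM_blk[OF M]) (use j in auto)
      then have "\<beta> (-j) \<in> insert p {b. \<exists>B\<in>S. \<exists>j\<in>{1..int n - 1}. blk (dim_row M) B (- j) = poly_mat b M}"
        using X j by auto
      then show "SM dvd \<beta> (-j)" unfolding SM_def s_minus_def by (rule Gcd_dvd)
    qed
    then show ?thesis using Xb by blast
  qed
  define J where "J = {X. \<exists>c. X = toepM n M c \<and> (\<forall>m\<le>0. c m = 0) \<and> (\<forall>m. h0 dvd c m)}"
  have JT: "J \<subseteq> toeplitz_set n M" using toepM_in[OF M] by (auto simp: J_def)
  have Jcar: "\<And>Y. Y \<in> J \<Longrightarrow> Y \<in> carrier_mat (n*d) (n*d)" using M by (auto simp: J_def)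
  have J0: "0\<^sub>m (n*d) (n*d) \<in> J"
    unfolding J_def using toepM_zero[OF M, of n] by (auto intro!: exI[of _ "\<lambda>m. 0"])
  have Jadd: "Y1 + Y2 \<in> J" if Yin: "Y1 \<in> J" "Y2 \<in> J" for Y1 Y2
  proof -
    obtain c1 where c1: "Y1 = toepM n M c1" "\<forall>m\<le>0. c1 m = 0" "\<forall>m. h0 dvd c1 m"
      using Yin(1) unfolding J_def by blast
    obtain c2 where c2: "Y2 = toepM n M c2" "\<forall>m\<le>0. c2 m = 0" "\<forall>m. h0 dvd c2 m"
      using Yin(2) unfolding J_def by blast
    note c = c1 c2
    then show ?thesis unfolding J_def
      by (intro CollectI exI[of _ "\<lambda>m. c1 m + c2 m"]) (auto simp: toepM_add[OF M])
  qed
  have Jsm: "a \<cdot>\<^sub>m Y \<in> J" if Yin: "Y \<in> J" for a Y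
  proof -
    obtain c where c: "Y = toepM n M c" "\<forall>m\<le>0. c m = 0" "\<forall>m. h0 dvd c m" using Yin unfolding J_def by blast
    then show ?thesis unfolding J_def
      by (intro CollectI exI[of _ "\<lambda>m. Polynomial.smult a (c m)"]) (auto simp: toepM_smult[OF M] dvd_smult)
  qed
  have Jright: "X * Y \<in> J" if X: "\<exists>\<beta>. X = toepM n M \<beta> \<and> (\<forall>j. 1 \<le> j \<longrightarrow> j < int n \<longrightarrow> SM dvd \<beta> (-j))"
    and Y: "Y \<in> J" for X Y
  proof -
    obtain \<beta> where b: "X = toepM n M \<beta>" "\<And>j. 1 \<le> j \<Longrightarrow> j < int n \<Longrightarrow> SM dvd \<beta> (-j)" using X by blast
    obtain c where c: "Y = toepM n M c" "\<And>m. m\<le>0 \<Longrightarrow> c m = 0" "\<And>m. h0 dvd c m" using Y by (auto simp: J_def)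
    have "X * Y = toepM n M (\<lambda>m. \<Sum>l\<in>{1..m}. \<beta> (m - l) * c l)"
      unfolding b(1) c(1) by (rule J_right[where \<beta>=\<beta> and c=c and n=n, OF M minp SMp b(2) c(2) c(3)])
    moreover have "\<forall>m\<le>0. (\<Sum>l\<in>{1..m}. \<beta> (m - l) * c l) = 0" by simp
    moreover have "\<forall>m. h0 dvd (\<Sum>l\<in>{1..m}. \<beta> (m - l) * c l)"
      by (auto intro!: dvd_sum dvd_mult c(3))
    ultimately show ?thesis unfolding J_def by blast
  qed
  have Jleft: "Y * X \<in> J" if X: "\<exists>\<beta>. X = toepM n M \<beta> \<and> (\<forall>j. 1 \<le> j \<longrightarrow> j < int n \<longrightarrow> SM dvd \<beta> (-j))"
    and Y: "Y \<in> J" for X Y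
  proof -
    obtain \<beta> where b: "X = toepM n M \<beta>" "\<And>j. 1 \<le> j \<Longrightarrow> j < int n \<Longrightarrow> SM dvd \<beta> (-j)" using X by blast
    obtain c where c: "Y = toepM n M c" "\<And>m. m\<le>0 \<Longrightarrow> c m = 0" "\<And>m. h0 dvd c m" using Y by (auto simp: J_def)
    have "Y * X = toepM n M (\<lambda>m. \<Sum>l\<in>{1..m}. c l * \<beta> (m - l))"
      unfolding b(1) c(1) by (rule J_left[where \<beta>=\<beta> and c=c and n=n, OF M minp SMp b(2) c(2) c(3)])
    moreover have "\<forall>m\<le>0. (\<Sum>l\<in>{1..m}. c l * \<beta> (m - l)) = 0" by simp
    moreover have "\<forall>m. h0 dvd (\<Sum>l\<in>{1..m}. c l * \<beta> (m - l))"
      by (auto intro!: dvd_sum dvd_mult2 c(3))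
    ultimately show ?thesis unfolding J_def by blast
  qed
  have Jlow: "\<exists>\<beta>. Y = toepM n M \<beta> \<and> (\<forall>j. 1 \<le> j \<longrightarrow> j < int n \<longrightarrow> SM dvd \<beta> (-j))" if "Y \<in> J" for Y
    using that unfolding J_def by fastforce
  define S' where "S' = {X + Y | X Y. X \<in> S \<and> Y \<in> J}"
  have sub': "is_subalgebra (n*d) S'"
    unfolding is_subalgebra_def
  proof (intro conjI ballI allI)
    show "S' \<subseteq> carrier_mat (n * d) (n * d)" unfolding S'_def using Scar Jcar by auto
    show "0\<^sub>m (n * d) (n * d) \<in> S'" unfolding S'_def using S0 J0
      by (auto intro!: exI[of _ "0\<^sub>m (n * d) (n * d)"])
  next
    fix Z1 Z2 assume Z1: "Z1 \<in> S'" and Z2: "Z2 \<in> S'"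
    obtain X1 Y1 where 1: "Z1 = X1 + Y1" "X1 \<in> S" "Y1 \<in> J" using Z1 unfolding S'_def by auto
    obtain X2 Y2 where 2: "Z2 = X2 + Y2" "X2 \<in> S" "Y2 \<in> J" using Z2 unfolding S'_def by auto
    have C: "X1 \<in> carrier_mat (n*d) (n*d)" "Y1 \<in> carrier_mat (n*d) (n*d)"
      "X2 \<in> carrier_mat (n*d) (n*d)" "Y2 \<in> carrier_mat (n*d) (n*d)"
      using Scar Jcar 1 2 by auto
    have "Z1 + Z2 = (X1 + X2) + (Y1 + Y2)"
      unfolding 1 2 by (rule mat_eqI_d[of _ "n*d"]) (use C in auto)
    moreover have "X1 + X2 \<in> S" using Sadd 1 2 by auto
    moreover have "Y1 + Y2 \<in> J" using Jadd 1 2 by auto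
    ultimately show "Z1 + Z2 \<in> S'" unfolding S'_def by blast
    have "Z1 * Z2 = (X1 + Y1) * X2 + (X1 + Y1) * Y2"
      unfolding 1 2 by (rule mult_add_distrib_mat[of _ "n*d" "n*d"]) (use C in auto)
    also have "(X1 + Y1) * X2 = X1 * X2 + Y1 * X2"
      by (rule add_mult_distrib_mat[of _ "n*d" "n*d"]) (use C in auto)
    also have "(X1 + Y1) * Y2 = X1 * Y2 + Y1 * Y2"
      by (rule add_mult_distrib_mat[of _ "n*d" "n*d"]) (use C in auto)
    also have "X1 * X2 + Y1 * X2 + (X1 * Y2 + Y1 * Y2) = X1 * X2 + (Y1 * X2 + (X1 * Y2 + Y1 * Y2))"
      by (rule mat_eqI_d[of _ "n*d"]) (use C in auto)
    finally have e: "Z1 * Z2 = X1 * X2 + (Y1 * X2 + (X1 * Y2 + Y1 * Y2))" .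
    have "Y1 * X2 \<in> J" by (rule Jleft[OF Slow[OF 2(2)] 1(3)])
    moreover have "X1 * Y2 \<in> J" by (rule Jright[OF Slow[OF 1(2)] 2(3)])
    moreover have "Y1 * Y2 \<in> J" by (rule Jright[OF Jlow[OF 1(3)] 2(3)])
    ultimately have "Y1 * X2 + (X1 * Y2 + Y1 * Y2) \<in> J" using Jadd by blast
    moreover have "X1 * X2 \<in> S" using Smul 1 2 by auto
    ultimately show "Z1 * Z2 \<in> S'" unfolding e S'_def by blast
  next
    fix a Z assume Z: "Z \<in> S'"
    obtain X Y where 1: "Z = X + Y" "X \<in> S" "Y \<in> J" using Z unfolding S'_def by auto
    have C: "X \<in> carrier_mat (n*d) (n*d)" "Y \<in> carrier_mat (n*d) (n*d)" using Scar Jcar 1 by auto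
    have "a \<cdot>\<^sub>m Z = a \<cdot>\<^sub>m X + a \<cdot>\<^sub>m Y" unfolding 1(1) by (rule add_smult_distrib_left_mat[OF C])
    then show "a \<cdot>\<^sub>m Z \<in> S'" unfolding S'_def using Ssm[OF 1(2)] Jsm[OF 1(3)] by blast
  qed
  have S'T: "S' \<subseteq> toeplitz_set n M"
  proof
    fix Z assume "Z \<in> S'"
    then obtain X Y where 1: "Z = X + Y" "X \<in> S" "Y \<in> J" unfolding S'_def by auto
    obtain b where b: "X = toepM n M b" using Slow[OF 1(2)] by blast
    obtain c where c: "Y = toepM n M c" using 1(3) unfolding J_def by blast
    show "Z \<in> toeplitz_set n M" unfolding 1 b c toepM_add[OF M] by (rule toepM_in[OF M])
  qed
  have SS': "S \<subseteq> S'"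
  proof
    fix X assume X: "X \<in> S"
    have "X = X + 0\<^sub>m (n*d) (n*d)" using Scar[OF X] by simp
    then show "X \<in> S'" unfolding S'_def using X J0 by blast
  qed
  have S'eq: "S' = S" by (rule maxi[OF sub' S'T SS'])
  define C0 where "C0 = toepM n M (\<lambda>m. if m = 1 then h0 else 0)"
  have C0J: "C0 \<in> J" unfolding J_def C0_def by (auto intro!: exI[of _ "\<lambda>m. if m = 1 then h0 else 0"])
  have "C0 = 0\<^sub>m (n*d) (n*d) + C0" using Jcar[OF C0J] by simp
  then have "C0 \<in> S'" unfolding S'_def using S0 C0J by blast
  then have C0S: "C0 \<in> S" using S'eq by simp
  have "blk (dim_row M) C0 1 = poly_mat h0 M"
    unfolding dR C0_def using toepM_blk[OF M, of n 1] n2 by simp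
  then have "h0 \<in> insert p {b. \<exists>B\<in>S. \<exists>j\<in>{1..int n - 1}. blk (dim_row M) B j = poly_mat b M}"
    using C0S n2 by force
  then have "SP dvd h0" unfolding SP_def s_plus_def by (rule Gcd_dvd)
  then have "SP * SM dvd h0 * SM" by (rule mult_dvd_mono) simp
  then have "SP * SM dvd p" using SMp by (simp add: mult.commute)
  then show ?thesis unfolding SP_def SM_def .
qed

theorem lemma7p3:
  fixes n d :: nat and M :: "complex mat" and p :: "complex poly"
    and S :: "complex mat set" and A :: "complex mat"
    and a :: "int \<Rightarrow> complex poly" and \<gamma> :: "int \<Rightarrow> complex poly"
  assumes n2: "n \<ge> 2"
    and M: "M \<in> carrier_mat d d"
    and minp: "is_min_poly M p"
    and nonderog: "char_poly M = p"
    and maxS: "maximal_subalgebra_in (n*d) (toeplitz_set n M) S"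
    and gen: "generic n d S"
    and AS: "A \<in> S"
    and cop: "\<forall>j\<in>{1..int n - 1}. coprime (a j) p \<and> coprime (a (- j)) p"
    and Apos: "\<forall>j\<in>{1..int n - 1}.
                 blk d A j = poly_mat (s_plus n M p S) M * poly_mat (a j) M"
    and Aneg: "\<forall>j\<in>{1..int n - 1}.
                 blk d A (- j) = poly_mat (s_minus n M p S) M * poly_mat (a (- j)) M"
    and gam: "\<forall>i\<in>{1..int n - 1}. p dvd \<gamma> i * a (i - int n) - 1"
  shows "\<forall>i\<in>{1..int n - 1}. \<forall>j\<in>{1..int n - 1}.
           (p div (s_plus n M p S * s_minus n M p S)) dvd (a i * \<gamma> i - a j * \<gamma> j)"
proof (intro ballI)
  fix i j :: int assume i: "i \<in> {1..int n - 1}" and j: "j \<in> {1..int n - 1}"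
  define SP where "SP = s_plus n M p S"
  define SM where "SM = s_minus n M p S"
  define q where "q = SP * SM"
  have qdvd: "q dvd p" unfolding q_def SP_def SM_def by (rule sprod_dvd[OF n2 M minp maxS])
  have sub: "is_subalgebra (n*d) S" and ST: "S \<subseteq> toeplitz_set n M"
    using maxS unfolding maximal_subalgebra_in_def by auto
  have AA: "A * A \<in> toeplitz_set n M" using sub AS ST unfolding is_subalgebra_def by blast
  obtain \<alpha> where Aa: "A = toepM n M \<alpha>" using toeplitz_rep[OF M] AS ST by blast
  have P: "p dvd \<alpha> k - SP * a k" if k: "k \<in> {1..int n - 1}" for k
  proof -
    have "poly_mat (\<alpha> k) M = blk d A k" unfolding Aa by (rule toepM_blk[OF M, symmetric]) (use k in auto)
    also have "\<dots> = poly_mat (SP * a k) M" using Apos k by (simp add: SP_def pm_mult[OF M])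
    finally show ?thesis using pm_eq_iff[OF M minp] by blast
  qed
  have N: "p dvd \<alpha> (- k) - SM * a (- k)" if k: "k \<in> {1..int n - 1}" for k
  proof -
    have "poly_mat (\<alpha> (- k)) M = blk d A (- k)" unfolding Aa by (rule toepM_blk[OF M, symmetric]) (use k in auto)
    also have "\<dots> = poly_mat (SM * a (- k)) M" using Aneg k by (simp add: SM_def pm_mult[OF M])
    finally show ?thesis using pm_eq_iff[OF M minp] by blast
  qed
  have rel0: "p dvd \<alpha> (int (nat i)) * \<alpha> (int (nat j) - int n) - \<alpha> (int (nat i) - int n) * \<alpha> (int (nat j))"
    by (rule toep_rel[OF M minp AA[unfolded Aa]]) (use i j in auto)
  have rel: "p dvd \<alpha> i * \<alpha> (j - int n) - \<alpha> (i - int n) * \<alpha> j" using rel0 i j by simp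
  have Pi: "p dvd \<alpha> i - SP * a i" using P[OF i] .
  have Pj: "p dvd \<alpha> j - SP * a j" using P[OF j] .
  have Ni: "p dvd \<alpha> (i - int n) - SM * a (i - int n)" using N[of "int n - i"] i by simp
  have Nj: "p dvd \<alpha> (j - int n) - SM * a (j - int n)" using N[of "int n - j"] j by simp
  have gi: "p dvd \<gamma> i * a (i - int n) - 1" using gam i by blast
  have gj: "p dvd \<gamma> j * a (j - int n) - 1" using gam j by blast
  define Ai where "Ai = \<alpha> i"
  define Aj where "Aj = \<alpha> j"
  define Bi where "Bi = \<alpha> (i - int n)"
  define Bj where "Bj = \<alpha> (j - int n)"
  define ai where "ai = a i"
  define aj where "aj = a j"
  define bi where "bi = a (i - int n)"
  define bj where "bj = a (j - int n)"
  define gi' where "gi' = \<gamma> i"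
  define gj' where "gj' = \<gamma> j"
  note defs = Ai_def Aj_def Bi_def Bj_def ai_def aj_def bi_def bj_def gi'_def gj'_def
  have idZ: "q * (ai * bj - bi * aj) = (Ai * Bj - Bi * Aj) - Bj * (Ai - SP * ai) - SP * ai * (Bj - SM * bj)
      + Aj * (Bi - SM * bi) + SM * bi * (Aj - SP * aj)"
    unfolding q_def by (simp add: algebra_simps)
  have Z: "p dvd q * (ai * bj - bi * aj)"
  proof -
    have r: "p dvd Ai * Bj - Bi * Aj" using rel unfolding defs .
    have t1: "p dvd Bj * (Ai - SP * ai)" using Pi unfolding defs by (rule dvd_mult)
    have t2: "p dvd SP * ai * (Bj - SM * bj)" using Nj unfolding defs by (rule dvd_mult)
    have t3: "p dvd Aj * (Bi - SM * bi)" using Ni unfolding defs by (rule dvd_mult)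
    have t4: "p dvd SM * bi * (Aj - SP * aj)" using Pj unfolding defs by (rule dvd_mult)
    show ?thesis unfolding idZ by (rule dvd_add[OF dvd_add[OF dvd_diff[OF dvd_diff[OF r t1] t2] t3] t4])
  qed
  have idY: "q * (ai * gi' - aj * gj') = - (q * ai * gi' * (gj' * bj - 1)) + q * aj * gj' * (gi' * bi - 1)
      + gi' * gj' * (q * (ai * bj - bi * aj))"
    by (simp add: algebra_simps)
  have Y: "p dvd q * (ai * gi' - aj * gj')"
  proof -
    have t1: "p dvd - (q * ai * gi' * (gj' * bj - 1))" using gj unfolding defs dvd_minus_iff by (rule dvd_mult)
    have t2: "p dvd q * aj * gj' * (gi' * bi - 1)" using gi unfolding defs by (rule dvd_mult)
    have t3: "p dvd gi' * gj' * (q * (ai * bj - bi * aj))" using Z by (rule dvd_mult)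
    show ?thesis unfolding idY by (rule dvd_add[OF dvd_add[OF t1 t2] t3])
  qed
  have p0: "p \<noteq> 0" using minp unfolding is_min_poly_def by auto
  have q0: "q \<noteq> 0" using qdvd p0 by auto
  have pq: "p = q * (p div q)" using qdvd by simp
  have "q * (p div q) dvd q * (ai * gi' - aj * gj')" using Y pq by simp
  then have "(p div q) dvd (ai * gi' - aj * gj')" using q0 by simp
  then show "(p div (s_plus n M p S * s_minus n M p S)) dvd (a i * \<gamma> i - a j * \<gamma> j)"
    unfolding q_def SP_def SM_def defs .
qed

end
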